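(* Let $G$ be a grid-labelled graph of type $(3,3)$ with exactly $4$ edges, all diagonal. Then $G$ satisfies the degree criterion if and only if either $G$ is locally isomorphic to the cross-hatch $B_4$, or $E(G)$ is the disjoint union of two criss-crosses, i.e. of two edge sets of the form $\{\{(i,j),(k,l)\},\{(i,l),(k,j)\}\}$ with $i\neq k$, $j\neq l$.
   Context: A grid-labelled graph of type $(a,b)$ is a simple graph whose vertex set is the grid $[a]\times[b]$. An edge $\{(i,j),(k,l)\}$ is diagonal if $i\neq k$ and $j\neq l$. The partial transpose $\Gamma(G)$ is the grid-labelled graph with edge set $\{\{(k,j),(i,l)\}:\{(i,j),(k,l)\}\in E(G)\}$; $G$ satisfies the degree criterion if every vertex has the same degree in $G$ and in $\Gamma(G)$. Two grid-labelled graphs $G,H$ of type $(a,b)$ are locally isomorphic if there are permutations $\pi$ of $[a]$ and $\sigma$ of $[b]$ with $\{(i,j),(k,l)\}\in E(G)\iff\{(\pi(i),\sigma(j)),(\pi(k),\sigma(l))\}\in E(H)$. The cross-hatch $B_4$ is the type $(3,3)$ graph with edges $\{(1,1),(2,3)\},\{(2,1),(3,3)\},\{(1,2),(3,1)\},\{(1,3),(3,2)\}$. *)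

theory Defs
  imports Main "HOL-Combinatorics.Permutations"
begin

type_synonym vtx = "nat \<times> nat"
type_synonym edges = "vtx set set"

definition grid :: "nat \<Rightarrow> nat \<Rightarrow> vtx set" where
  "grid a b = {1..a} \<times> {1..b}"

definition grid_graph :: "nat \<Rightarrow> nat \<Rightarrow> edges \<Rightarrow> bool" where
  "grid_graph a b E \<longleftrightarrow>
     E \<subseteq> {{u, v} | u v. u \<in> grid a b \<and> v \<in> grid a b \<and> u \<noteq> v}"

definition diagonal :: "vtx set \<Rightarrow> bool" where
  "diagonal e \<longleftrightarrow> (\<exists>i j k l. e = {(i, j), (k, l)} \<and> i \<noteq> k \<and> j \<noteq> l)"

definition partial_transpose :: "edges \<Rightarrow> edges" where
  "partial_transpose E = {{(k, j), (i, l)} | i j k l. {(i, j), (k, l)} \<in> E}"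

definition deg :: "edges \<Rightarrow> vtx \<Rightarrow> nat" where
  "deg E v = card {e \<in> E. v \<in> e}"

definition degree_criterion :: "nat \<Rightarrow> nat \<Rightarrow> edges \<Rightarrow> bool" where
  "degree_criterion a b E \<longleftrightarrow>
     (\<forall>v \<in> grid a b. deg E v = deg (partial_transpose E) v)"

definition locally_isomorphic :: "nat \<Rightarrow> nat \<Rightarrow> edges \<Rightarrow> edges \<Rightarrow> bool" where
  "locally_isomorphic a b G H \<longleftrightarrow>
     (\<exists>\<pi> \<sigma>. \<pi> permutes {1..a} \<and> \<sigma> permutes {1..b} \<and>
        (\<forall>i j k l. {(i, j), (k, l)} \<in> G \<longleftrightarrow>
                   {(\<pi> i, \<sigma> j), (\<pi> k, \<sigma> l)} \<in> H))"

definition cross_hatch_B4 :: edges where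
  "cross_hatch_B4 = {{(1,1),(2,3)}, {(2,1),(3,3)}, {(1,2),(3,1)}, {(1,3),(3,2)}}"

definition criss_cross :: "nat \<Rightarrow> nat \<Rightarrow> nat \<Rightarrow> nat \<Rightarrow> edges" where
  "criss_cross i j k l = {{(i, j), (k, l)}, {(i, l), (k, j)}}"

definition is_criss_cross :: "edges \<Rightarrow> bool" where
  "is_criss_cross C \<longleftrightarrow> (\<exists>i j k l. i \<noteq> k \<and> j \<noteq> l \<and> C = criss_cross i j k l)"

end

theory Submission
  imports Defs
begin

type_synonym quad = "nat \<times> nat \<times> nat \<times> nat"

definition fq :: "quad \<Rightarrow> vtx set" where
  "fq q = (case q of (i,j,k,l) \<Rightarrow> {(i,j),(k,l)})"
definition fm :: "vtx \<Rightarrow> quad \<Rightarrow> bool" where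
  "fm v q = (case q of (i,j,k,l) \<Rightarrow> v = (i,j) \<or> v = (k,l))"
definition sw :: "quad \<Rightarrow> quad" where
  "sw q = (case q of (i,j,k,l) \<Rightarrow> (i,l,k,j))"
definition Q18l :: "quad list" where "Q18l = [(1,1,2,2),(1,1,2,3),(1,1,3,2),(1,1,3,3),(1,2,2,1),(1,2,2,3),(1,2,3,1),(1,2,3,3),(1,3,2,1),(1,3,2,2),(1,3,3,1),(1,3,3,2),(2,1,3,2),(2,1,3,3),(2,2,3,1),(2,2,3,3),(2,3,3,1),(2,3,3,2)]"
definition Q9l :: "quad list" where "Q9l = [(1,1,2,2),(1,1,2,3),(1,1,3,2),(1,1,3,3),(1,2,2,3),(1,2,3,3),(2,1,3,2),(2,1,3,3),(2,2,3,3)]"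
definition V9l :: "vtx list" where
  "V9l = [(1,1),(1,2),(1,3),(2,1),(2,2),(2,3),(3,1),(3,2),(3,3)]"
definition P3 :: "nat list list" where
  "P3 = [[1,2,3],[1,3,2],[2,1,3],[2,3,1],[3,1,2],[3,2,1]]"
definition pf :: "nat list \<Rightarrow> nat \<Rightarrow> nat" where
  "pf ps x = (if x = 1 then ps ! 0 else if x = 2 then ps ! 1 else if x = 3 then ps ! 2 else x)"
definition canon :: "quad \<Rightarrow> quad" where
  "canon q = (case q of (i,j,k,l) \<Rightarrow> if i < k then (i,j,k,l) else (k,l,i,j))"
definition appq :: "nat list \<Rightarrow> nat list \<Rightarrow> quad \<Rightarrow> quad" where
  "appq ps ss q = (case q of (i,j,k,l) \<Rightarrow> (pf ps i, pf ss j, pf ps k, pf ss l))"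
definition gq :: "nat list \<Rightarrow> nat list \<Rightarrow> quad \<Rightarrow> quad" where
  "gq ps ss q = canon (appq ps ss q)"
definition B4q :: "quad list" where "B4q = [(1,1,2,3),(2,1,3,3),(1,2,3,1),(1,3,3,2)]"

fun comb :: "nat \<Rightarrow> 'a list \<Rightarrow> 'a list list" where
  "comb 0 xs = [[]]"
| "comb (Suc k) [] = []"
| "comb (Suc k) (x#xs) = map ((#) x) (comb k xs) @ comb (Suc k) xs"

fun all1 :: "('a \<Rightarrow> 'a list \<Rightarrow> bool) \<Rightarrow> 'a list \<Rightarrow> bool" where
  "all1 P [] = True"
| "all1 P (x#xs) = (P x xs \<and> all1 P xs)"

fun digval :: "int list \<Rightarrow> int" where
  "digval [] = 0"
| "digval (c#cs) = c + 9 * digval cs"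

definition dd :: "vtx \<Rightarrow> quad \<Rightarrow> int" where
  "dd v q = (if fm v q then 1 else 0) - (if fm v (sw q) then 1 else 0)"
definition Nf :: "quad \<Rightarrow> int" where
  "Nf q = digval (map (\<lambda>v. dd v q) V9l)"

definition seq :: "'a list \<Rightarrow> 'a list \<Rightarrow> bool" where
  "seq xs ys \<longleftrightarrow> (\<forall>x\<in>set xs. x \<in> set ys) \<and> (\<forall>y\<in>set ys. y \<in> set xs)"

lemma seq_iff: "seq xs ys \<longleftrightarrow> set xs = set ys"
  unfolding seq_def by auto

definition lix :: "quad list \<Rightarrow> bool" where
  "lix ys \<longleftrightarrow> (\<exists>ps\<in>set P3. \<exists>ss\<in>set P3. set (map (gq ps ss) ys) = set B4q)"
definition ccx :: "quad list \<Rightarrow> bool" where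
  "ccx ys \<longleftrightarrow> (\<exists>c\<in>set Q9l. \<exists>d\<in>set Q9l. c \<noteq> d \<and> set ys = set [c, sw c, d, sw d])"

definition NLl :: "(quad \<times> int) list" where "NLl = [((1,1,2,2),5824),((1,1,2,3),58240),((1,1,3,2),4251520),((1,1,3,3),42515200),((1,2,2,1),-5824),((1,2,2,3),52416),((1,2,3,1),-4251520),((1,2,3,3),38263680),((1,3,2,1),-58240),((1,3,2,2),-52416),((1,3,3,1),-42515200),((1,3,3,2),-38263680),((2,1,3,2),4245696),((2,1,3,3),42456960),((2,2,3,1),-4245696),((2,2,3,3),38211264),((2,3,3,1),-42456960),((2,3,3,2),-38211264)]"
definition GCC :: "(quad list \<times> quad \<times> quad) list" where "GCC = [([(1,1,2,2),(1,1,2,3),(1,2,2,1),(1,3,2,1)],(1,1,2,2),(1,1,2,3)),([(1,1,2,2),(1,1,3,2),(1,2,2,1),(1,2,3,1)],(1,1,2,2),(1,1,3,2)),([(1,1,2,2),(1,1,3,3),(1,2,2,1),(1,3,3,1)],(1,1,2,2),(1,1,3,3)),([(1,1,2,2),(1,2,2,1),(1,2,2,3),(1,3,2,2)],(1,1,2,2),(1,2,2,3)),([(1,1,2,2),(1,2,2,1),(1,2,3,3),(1,3,3,2)],(1,1,2,2),(1,2,3,3)),([(1,1,2,2),(1,2,2,1),(2,1,3,2),(2,2,3,1)],(1,1,2,2),(2,1,3,2)),([(1,1,2,2),(1,2,2,1),(2,1,3,3),(2,3,3,1)],(1,1,2,2),(2,1,3,3)),([(1,1,2,2),(1,2,2,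1),(2,2,3,3),(2,3,3,2)],(1,1,2,2),(2,2,3,3)),([(1,1,2,3),(1,1,3,2),(1,2,3,1),(1,3,2,1)],(1,1,2,3),(1,1,3,2)),([(1,1,2,3),(1,1,3,3),(1,3,2,1),(1,3,3,1)],(1,1,2,3),(1,1,3,3)),([(1,1,2,3),(1,2,2,3),(1,3,2,1),(1,3,2,2)],(1,1,2,3),(1,2,2,3)),([(1,1,2,3),(1,2,3,3),(1,3,2,1),(1,3,3,2)],(1,1,2,3),(1,2,3,3)),([(1,1,2,3),(1,3,2,1),(2,1,3,2),(2,2,3,1)],(1,1,2,3),(2,1,3,2)),([(1,1,2,3),(1,3,2,1),(2,1,3,3),(2,3,3,1)],(1,1,2,3),(2,1,3,3)),([(1,1,2,3),(1,3,2,1),(2,2,3,3),(2,3,3,2)],(1,1,2,3),(2,2,3,3)),([(1,1,3,2),(1,1,3,3),(1,2,3,1),(1,3,3,1)],(1,1,3,2),(1,1,3,3)),([(1,1,3,2),(1,2,2,3),(1,2,3,1),(1,3,2,2)],(1,1,3,2),(1,2,2,3)),([(1,1,3,2),(1,2,3,1),(1,2,3,3),(1,3,3,2)],(1,1,3,2),(1,2,3,3)),([(1,1,3,2),(1,2,3,1),(2,1,3,2),(2,2,3,1)],(1,1,3,2),(2,1,3,2)),([(1,1,3,2),(1,2,3,1),(2,1,3,3),(2,3,3,1)],(1,1,3,2),(2,1,3,3)),([(1,1,3,2),(1,2,3,1),(2,2,3,3),(2,3,3,2)],(1,1,3,2),(2,2,3,3)),([(1,1,3,3),(1,2,2,3)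,(1,3,2,2),(1,3,3,1)],(1,1,3,3),(1,2,2,3)),([(1,1,3,3),(1,2,3,3),(1,3,3,1),(1,3,3,2)],(1,1,3,3),(1,2,3,3)),([(1,1,3,3),(1,3,3,1),(2,1,3,2),(2,2,3,1)],(1,1,3,3),(2,1,3,2)),([(1,1,3,3),(1,3,3,1),(2,1,3,3),(2,3,3,1)],(1,1,3,3),(2,1,3,3)),([(1,1,3,3),(1,3,3,1),(2,2,3,3),(2,3,3,2)],(1,1,3,3),(2,2,3,3)),([(1,2,2,3),(1,2,3,3),(1,3,2,2),(1,3,3,2)],(1,2,2,3),(1,2,3,3)),([(1,2,2,3),(1,3,2,2),(2,1,3,2),(2,2,3,1)],(1,2,2,3),(2,1,3,2)),([(1,2,2,3),(1,3,2,2),(2,1,3,3),(2,3,3,1)],(1,2,2,3),(2,1,3,3)),([(1,2,2,3),(1,3,2,2),(2,2,3,3),(2,3,3,2)],(1,2,2,3),(2,2,3,3)),([(1,2,3,3),(1,3,3,2),(2,1,3,2),(2,2,3,1)],(1,2,3,3),(2,1,3,2)),([(1,2,3,3),(1,3,3,2),(2,1,3,3),(2,3,3,1)],(1,2,3,3),(2,1,3,3)),([(1,2,3,3),(1,3,3,2),(2,2,3,3),(2,3,3,2)],(1,2,3,3),(2,2,3,3)),([(2,1,3,2),(2,1,3,3),(2,2,3,1),(2,3,3,1)],(2,1,3,2),(2,1,3,3)),([(2,1,3,2),(2,2,3,1),(2,2,3,3),(2,3,3,2)],(2,1,3,2),(2,2,3,3)),([(2,1,3,3),(2,2,3,3),(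2,3,3,1),(2,3,3,2)],(2,1,3,3),(2,2,3,3))]"
definition GLI :: "(quad list \<times> nat list \<times> nat list) list" where "GLI = [([(1,1,2,2),(1,2,2,3),(1,3,3,1),(2,1,3,3)],[1,3,2],[3,2,1]),([(1,1,2,2),(1,2,3,1),(2,1,3,3),(2,3,3,2)],[2,1,3],[3,1,2]),([(1,1,2,2),(1,2,3,3),(1,3,2,1),(2,3,3,2)],[1,3,2],[2,1,3]),([(1,1,2,2),(1,2,3,3),(1,3,3,1),(2,1,3,2)],[1,2,3],[1,3,2]),([(1,1,2,3),(1,2,2,1),(1,3,3,2),(2,2,3,3)],[1,3,2],[2,3,1]),([(1,1,2,3),(1,2,3,1),(1,3,2,2),(2,1,3,2)],[1,3,2],[3,1,2]),([(1,1,2,3),(1,2,3,1),(1,3,3,2),(2,1,3,3)],[1,2,3],[1,2,3]),([(1,1,2,3),(1,3,3,1),(2,1,3,2),(2,2,3,3)],[2,1,3],[3,2,1]),([(1,1,3,2),(1,2,2,1),(2,2,3,3),(2,3,3,1)],[2,1,3],[1,3,2]),([(1,1,3,2),(1,2,2,3),(1,3,2,1),(2,2,3,1)],[1,3,2],[1,3,2]),([(1,1,3,2),(1,2,2,3),(1,3,3,1),(2,2,3,3)],[1,2,3],[2,1,3]),([(1,1,3,2),(1,2,3,3),(1,3,2,1),(2,3,3,1)],[1,2,3],[3,2,1]),([(1,1,3,3),(1,2,2,1),(1,3,2,2),(2,3,3,1)],[1,3,2],[1,2,3]),([(1,1,3,3),(1,2,2,1),(1,3,3,2),(2,2,3,1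)],[1,2,3],[3,1,2]),([(1,1,3,3),(1,2,3,1),(1,3,2,2),(2,3,3,2)],[1,2,3],[2,3,1]),([(1,1,3,3),(1,3,2,1),(2,2,3,1),(2,3,3,2)],[2,1,3],[1,2,3]),([(1,2,2,3),(1,3,3,2),(2,1,3,3),(2,2,3,1)],[2,1,3],[2,3,1]),([(1,2,3,3),(1,3,2,2),(2,1,3,2),(2,3,3,1)],[2,1,3],[2,1,3])]"
definition GoodL :: "quad list list" where "GoodL = map fst GCC @ map fst GLI"

lemma NLl_eq: "map (\<lambda>q. (q, Nf q)) Q18l = NLl"
  by (simp add: Q18l_def NLl_def Nf_def V9l_def dd_def fm_def sw_def)

lemma all1_comb: "list_all P (comb (Suc k) xs) = all1 (\<lambda>x r. list_all (\<lambda>ys. P (x#ys)) (comb k r)) xs"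
  by (induction xs) (auto simp: list_all_iff)

lemma list_all_comb0: "list_all P (comb 0 xs) = P []"
  by simp

lemma comb_map: "comb k (map h xs) = map (map h) (comb k xs)"
  by (induction k xs rule: comb.induct) auto

lemma comp_main0: "list_all (\<lambda>zs. sum_list (map snd zs) = 0 \<longrightarrow> map fst zs \<in> set GoodL) (comb 4 NLl)"
  unfolding numeral_eq_Suc pred_numeral_simps Num.BitM.simps all1_comb list_all_comb0
  by (simp add: NLl_def GoodL_def GCC_def GLI_def)

lemma comp_main: "list_all (\<lambda>ys. sum_list (map Nf ys) = 0 \<longrightarrow> ys \<in> set GoodL) (comb 4 Q18l)"
proof -
  have "list_all (\<lambda>zs. sum_list (map snd zs) = 0 \<longrightarrow> map fst zs \<in> set GoodL) (comb 4 (map (\<lambda>q. (q, Nf q)) Q18l))"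
    using comp_main0 by (simp only: NLl_eq)
  then show ?thesis by (simp add: comb_map list_all_iff comp_def)
qed

lemma comp_cc: "list_all (\<lambda>(ys,c,d). c \<in> set Q9l \<and> d \<in> set Q9l \<and> c \<noteq> d \<and> seq ys [c, sw c, d, sw d]) GCC"
  by (simp add: GCC_def Q9l_def sw_def seq_def)

lemma comp_li: "list_all (\<lambda>(ys,ps,ss). ps \<in> set P3 \<and> ss \<in> set P3 \<and> seq (map (gq ps ss) ys) B4q) GLI"
  by (simp add: GLI_def P3_def seq_def gq_def canon_def appq_def pf_def B4q_def)

definition Q18p :: "quad \<Rightarrow> bool" where
  "Q18p q = (case q of (i,j,k,l) \<Rightarrow> i \<in> {1,2,3} \<and> j \<in> {1,2,3} \<and> k \<in> {1,2,3} \<and> l \<in> {1,2,3} \<and> i < k \<and> j \<noteq> l)"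
definition Q9p :: "quad \<Rightarrow> bool" where
  "Q9p q = (case q of (i,j,k,l) \<Rightarrow> i \<in> {1,2,3} \<and> j \<in> {1,2,3} \<and> k \<in> {1,2,3} \<and> l \<in> {1,2,3} \<and> i < k \<and> j < l)"

definition LIA :: "(nat list \<times> nat list \<times> quad list) list" where "LIA = [([1,2,3],[1,2,3],[(1,1,2,3),(1,2,3,1),(1,3,3,2),(2,1,3,3)]),([1,2,3],[1,3,2],[(1,1,2,2),(1,2,3,3),(1,3,3,1),(2,1,3,2)]),([1,2,3],[2,1,3],[(1,1,3,2),(1,2,2,3),(1,3,3,1),(2,2,3,3)]),([1,2,3],[2,3,1],[(1,1,3,3),(1,2,3,1),(1,3,2,2),(2,3,3,2)]),([1,2,3],[3,1,2],[(1,1,3,3),(1,2,2,1),(1,3,3,2),(2,2,3,1)]),([1,2,3],[3,2,1],[(1,1,3,2),(1,2,3,3),(1,3,2,1),(2,3,3,1)]),([1,3,2],[1,2,3],[(1,1,3,3),(1,2,2,1),(1,3,2,2),(2,3,3,1)]),([1,3,2],[1,3,2],[(1,1,3,2),(1,2,2,3),(1,3,2,1),(2,2,3,1)]),([1,3,2],[2,1,3],[(1,1,2,2),(1,2,3,3),(1,3,2,1),(2,3,3,2)]),([1,3,2],[2,3,1],[(1,1,2,3),(1,2,2,1),(1,3,3,2),(2,2,3,3)]),([1,3,2],[3,1,2],[(1,1,2,3),(1,2,3,1),(1,3,2,2),(2,1,3,2)]),([1,3,2],[3,2,1],[(1,1,2,2),(1,2,2,3),(1,3,3,1),(2,1,3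,3)]),([2,1,3],[1,2,3],[(1,1,3,3),(1,3,2,1),(2,2,3,1),(2,3,3,2)]),([2,1,3],[1,3,2],[(1,1,3,2),(1,2,2,1),(2,2,3,3),(2,3,3,1)]),([2,1,3],[2,1,3],[(1,2,3,3),(1,3,2,2),(2,1,3,2),(2,3,3,1)]),([2,1,3],[2,3,1],[(1,2,2,3),(1,3,3,2),(2,1,3,3),(2,2,3,1)]),([2,1,3],[3,1,2],[(1,1,2,2),(1,2,3,1),(2,1,3,3),(2,3,3,2)]),([2,1,3],[3,2,1],[(1,1,2,3),(1,3,3,1),(2,1,3,2),(2,2,3,3)]),([2,3,1],[1,2,3],[(1,1,2,3),(1,3,3,1),(2,1,3,2),(2,2,3,3)]),([2,3,1],[1,3,2],[(1,1,2,2),(1,2,3,1),(2,1,3,3),(2,3,3,2)]),([2,3,1],[2,1,3],[(1,2,2,3),(1,3,3,2),(2,1,3,3),(2,2,3,1)]),([2,3,1],[2,3,1],[(1,2,3,3),(1,3,2,2),(2,1,3,2),(2,3,3,1)]),([2,3,1],[3,1,2],[(1,1,3,2),(1,2,2,1),(2,2,3,3),(2,3,3,1)]),([2,3,1],[3,2,1],[(1,1,3,3),(1,3,2,1),(2,2,3,1),(2,3,3,2)]),([3,1,2],[1,2,3],[(1,1,2,2),(1,2,2,3),(1,3,3,1),(2,1,3,3)]),([3,1,2],[1,3,2],[(1,1,2,3),(1,2,3,1),(1,3,2,2),(2,1,3,2)]),([3,1,2],[2,1,3],[(1,1,2,3),(1,2,2,1),(1,3,3,2),(2,2,3,3)]),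([3,1,2],[2,3,1],[(1,1,2,2),(1,2,3,3),(1,3,2,1),(2,3,3,2)]),([3,1,2],[3,1,2],[(1,1,3,2),(1,2,2,3),(1,3,2,1),(2,2,3,1)]),([3,1,2],[3,2,1],[(1,1,3,3),(1,2,2,1),(1,3,2,2),(2,3,3,1)]),([3,2,1],[1,2,3],[(1,1,3,2),(1,2,3,3),(1,3,2,1),(2,3,3,1)]),([3,2,1],[1,3,2],[(1,1,3,3),(1,2,2,1),(1,3,3,2),(2,2,3,1)]),([3,2,1],[2,1,3],[(1,1,3,3),(1,2,3,1),(1,3,2,2),(2,3,3,2)]),([3,2,1],[2,3,1],[(1,1,3,2),(1,2,2,3),(1,3,3,1),(2,2,3,3)]),([3,2,1],[3,1,2],[(1,1,2,2),(1,2,3,3),(1,3,3,1),(2,1,3,2)]),([3,2,1],[3,2,1],[(1,1,2,3),(1,2,3,1),(1,3,3,2),(2,1,3,3)])]"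

lemma comp_lia: "list_all (\<lambda>(ps,ss,pre). seq (map (gq ps ss) pre) B4q \<and> distinct pre \<and> list_all Q18p pre \<and> sum_list (map Nf pre) = 0) LIA"
  by (simp add: LIA_def seq_def gq_def canon_def appq_def pf_def B4q_def Q18p_def Nf_def V9l_def dd_def fm_def sw_def)

lemma comp_lia_cover: "\<forall>ps\<in>set P3. \<forall>ss\<in>set P3. \<exists>pre. (ps,ss,pre) \<in> set LIA"
  by (simp add: P3_def LIA_def)

lemma fm_iff: "v \<in> fq q \<longleftrightarrow> fm v q"
  by (cases q rule: prod_cases4) (auto simp: fq_def fm_def)

lemma Q18_iff: "q \<in> set Q18l \<longleftrightarrow> Q18p q"
proof -
  obtain i j k l where q: "q = (i,j,k,l)" by (cases q rule: prod_cases4)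
  show ?thesis
  proof
    assume "q \<in> set Q18l"
    then show "Q18p q" unfolding q Q18l_def
      by (simp only: list.set insert_iff empty_iff simp_thms) (elim disjE; simp add: Q18p_def)
  next
    assume "Q18p q"
    then have "(i = 1 \<or> i = 2 \<or> i = 3) \<and> (j = 1 \<or> j = 2 \<or> j = 3) \<and> (k = 1 \<or> k = 2 \<or> k = 3) \<and> (l = 1 \<or> l = 2 \<or> l = 3) \<and> i < k \<and> j \<noteq> l"
      by (simp add: q Q18p_def)
    then show "q \<in> set Q18l" unfolding q Q18l_def by (elim conjE disjE) simp_all
  qed
qed

lemma Q9_iff: "q \<in> set Q9l \<longleftrightarrow> Q9p q"
proof -
  obtain i j k l where q: "q = (i,j,k,l)" by (cases q rule: prod_cases4)
  show ?thesis
  proof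
    assume "q \<in> set Q9l"
    then show "Q9p q" unfolding q Q9l_def
      by (simp only: list.set insert_iff empty_iff simp_thms) (elim disjE; simp add: Q9p_def)
  next
    assume "Q9p q"
    then have "(i = 1 \<or> i = 2 \<or> i = 3) \<and> (j = 1 \<or> j = 2 \<or> j = 3) \<and> (k = 1 \<or> k = 2 \<or> k = 3) \<and> (l = 1 \<or> l = 2 \<or> l = 3) \<and> i < k \<and> j < l"
      by (simp add: q Q9p_def)
    then show "q \<in> set Q9l" unfolding q Q9l_def by (elim conjE disjE) simp_all
  qed
qed

lemma distQ18: "distinct Q18l"
  by (simp add: Q18l_def)

lemma Q18_lt: "(i,j,k,l) \<in> set Q18l \<Longrightarrow> i < k"
  unfolding Q18_iff Q18p_def by simp

lemma inj_fq: "inj_on fq (set Q18l)"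
proof (rule inj_onI)
  fix x y assume xy: "x \<in> set Q18l" "y \<in> set Q18l" "fq x = fq y"
  obtain a b c d where x: "x = (a,b,c,d)" by (cases x rule: prod_cases4)
  obtain a' b' c' d' where y: "y = (a',b',c',d')" by (cases y rule: prod_cases4)
  have "a < c" "a' < c'" using xy(1,2) Q18_lt unfolding x y by blast+
  moreover have "{(a,b),(c,d)} = {(a',b'),(c',d')}" using xy(3) by (simp add: x y fq_def)
  ultimately show "x = y" unfolding x y doubleton_eq_iff by auto
qed

lemma sw_sw[simp]: "sw (sw q) = q"
  by (cases q rule: prod_cases4) (simp add: sw_def)

lemma inj_sw: "inj sw"
  by (metis injI sw_sw)

lemma sw_Q18: "q \<in> set Q18l \<Longrightarrow> sw q \<in> set Q18l"
  by (cases q rule: prod_cases4) (auto simp: Q18_iff Q18p_def sw_def simp del: insert_iff)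

lemma pt_fq: "partial_transpose (fq ` S) = fq ` sw ` S"
proof
  show "partial_transpose (fq ` S) \<subseteq> fq ` sw ` S"
  proof
    fix e assume "e \<in> partial_transpose (fq ` S)"
    then obtain i j k l where e: "e = {(k, j), (i, l)}" and m: "{(i, j), (k, l)} \<in> fq ` S"
      unfolding partial_transpose_def by blast
    then obtain q where q: "q \<in> S" "{(i, j), (k, l)} = fq q" by auto
    obtain a b c d where qd: "q = (a,b,c,d)" by (cases q rule: prod_cases4)
    from q(2) have "(i,j) = (a,b) \<and> (k,l) = (c,d) \<or> (i,j) = (c,d) \<and> (k,l) = (a,b)"
      by (simp add: qd fq_def doubleton_eq_iff)
    then have "e = fq (sw q)" using e by (auto simp: qd fq_def sw_def insert_commute)
    then show "e \<in> fq ` sw ` S" using q(1) by blast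
  qed
next
  show "fq ` sw ` S \<subseteq> partial_transpose (fq ` S)"
  proof
    fix e assume "e \<in> fq ` sw ` S"
    then obtain q where q: "q \<in> S" "e = fq (sw q)" by auto
    obtain a b c d where qd: "q = (a,b,c,d)" by (cases q rule: prod_cases4)
    have "e = {(c, b), (a, d)}" using q(2) by (simp add: qd fq_def sw_def insert_commute)
    moreover have "{(a, b), (c, d)} \<in> fq ` S" using q(1) qd by (force simp: fq_def)
    ultimately show "e \<in> partial_transpose (fq ` S)" unfolding partial_transpose_def by blast
  qed
qed

lemma deg_fq:
  assumes inj: "inj_on fq S"
  shows "deg (fq ` S) v = card {q \<in> S. fm v q}"
proof -
  have "{e \<in> fq ` S. v \<in> e} = fq ` {q \<in> S. fm v q}" by (auto simp: fm_iff)
  moreover have "inj_on fq {q \<in> S. fm v q}" using inj by (rule inj_on_subset) auto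
  ultimately show ?thesis unfolding deg_def by (simp add: card_image)
qed

lemma grid33: "grid 3 3 = set V9l"
proof -
  have "{1..3::nat} = {1,2,3}" by auto
  then show ?thesis by (simp add: grid_def V9l_def)
qed

lemma dc_fq:
  assumes "T \<subseteq> set Q18l"
  shows "degree_criterion 3 3 (fq ` T) \<longleftrightarrow> (\<forall>v\<in>set V9l. card {q \<in> T. fm v q} = card {q \<in> T. fm v (sw q)})"
proof -
  have i1: "inj_on fq T" using inj_fq assms inj_on_subset by blast
  have "sw ` T \<subseteq> set Q18l" using assms sw_Q18 by auto
  then have i2: "inj_on fq (sw ` T)" using inj_fq inj_on_subset by blast
  have c: "card {q \<in> sw ` T. fm v q} = card {q \<in> T. fm v (sw q)}" for v
  proof -
    have "{q \<in> sw ` T. fm v q} = sw ` {q \<in> T. fm v (sw q)}" by auto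
    moreover have "inj_on sw {q \<in> T. fm v (sw q)}" using inj_sw inj_on_subset by blast
    ultimately show ?thesis by (simp add: card_image)
  qed
  show ?thesis unfolding degree_criterion_def grid33 pt_fq deg_fq[OF i1] deg_fq[OF i2] c ..
qed

lemma digval_sum:
  "digval (map (\<lambda>v. sum_list (map (\<lambda>q. h v q) ys)) vs) = sum_list (map (\<lambda>q. digval (map (\<lambda>v. h v q) vs)) ys)"
  by (induction vs) (simp_all add: sum_list_addf sum_list_const_mult)

lemma digval_zero: "\<forall>c\<in>set cs. \<bar>c\<bar> \<le> 4 \<Longrightarrow> digval cs = 0 \<longleftrightarrow> (\<forall>c\<in>set cs. c = 0)"
proof (induction cs)
  case (Cons c cs)
  have b: "\<bar>c\<bar> \<le> 4" using Cons.prems by simp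
  have "digval (c#cs) = 0 \<longleftrightarrow> c = 0 \<and> digval cs = 0"
  proof
    assume h: "digval (c#cs) = 0"
    then have "c = - 9 * digval cs" by simp
    with b have "digval cs = 0" by linarith
    then show "c = 0 \<and> digval cs = 0" using h by simp
  qed simp
  then show ?case using Cons by simp
qed simp

lemma sum_dd: "sum_list (map (dd v) ys) = int (length (filter (fm v) ys)) - int (length (filter (\<lambda>q. fm v (sw q)) ys))"
  by (induction ys) (auto simp: dd_def)

lemma len_filter_card: "distinct ys \<Longrightarrow> length (filter P ys) = card {q \<in> set ys. P q}"
  by (simp add: distinct_length_filter Int_def conj_commute)

lemma enc:
  assumes "distinct ys" "length ys \<le> 4"
  shows "sum_list (map Nf ys) = 0 \<longleftrightarrow> (\<forall>v\<in>set V9l. card {q \<in> set ys. fm v q} = card {q \<in> set ys. fm v (sw q)})"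
proof -
  have "sum_list (map Nf ys) = digval (map (\<lambda>v. sum_list (map (\<lambda>q. dd v q) ys)) V9l)"
    unfolding digval_sum Nf_def ..
  moreover have "\<forall>c\<in>set (map (\<lambda>v. sum_list (map (\<lambda>q. dd v q) ys)) V9l). \<bar>c\<bar> \<le> 4"
  proof
    fix c assume "c \<in> set (map (\<lambda>v. sum_list (map (\<lambda>q. dd v q) ys)) V9l)"
    then obtain v where c: "c = sum_list (map (dd v) ys)" by auto
    have "length (filter (fm v) ys) \<le> 4" "length (filter (\<lambda>q. fm v (sw q)) ys) \<le> 4"
      using length_filter_le assms(2) order_trans by blast+
    then show "\<bar>c\<bar> \<le> 4" unfolding c sum_dd by linarith
  qed
  ultimately have "sum_list (map Nf ys) = 0 \<longleftrightarrow> (\<forall>c\<in>set (map (\<lambda>v. sum_list (map (\<lambda>q. dd v q) ys)) V9l). c = 0)"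
    using digval_zero by simp
  also have "\<dots> \<longleftrightarrow> (\<forall>v\<in>set V9l. sum_list (map (dd v) ys) = 0)"
    by simp
  also have "\<dots> \<longleftrightarrow> (\<forall>v\<in>set V9l. card {q \<in> set ys. fm v q} = card {q \<in> set ys. fm v (sw q)})"
    unfolding sum_dd len_filter_card[OF assms(1)] by simp
  finally show ?thesis .
qed

lemma comb_Suc_Cons: "set (comb (Suc m) (x#xs)) = (\<lambda>ys. x#ys) ` set (comb m xs) \<union> set (comb (Suc m) xs)"
  by simp

lemma comb_exists:
  "distinct xs \<Longrightarrow> T \<subseteq> set xs \<Longrightarrow> card T = k \<Longrightarrow> \<exists>ys\<in>set (comb k xs). set ys = T \<and> distinct ys"
proof (induction xs arbitrary: k T)
  case Nil
  then have T: "T = {}" by simp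
  then have k: "k = 0" using Nil.prems(3) by simp
  show ?case unfolding T k by simp
next
  case (Cons x xs)
  have dx: "distinct xs" using Cons.prems(1) by simp
  have xn: "x \<notin> set xs" using Cons.prems(1) by simp
  have f: "finite T" using Cons.prems(2) finite_subset by blast
  show ?case
  proof (cases k)
    case 0
    then have T: "T = {}" using Cons.prems(3) f by simp
    show ?thesis unfolding T 0 by simp
  next
    case (Suc m)
    show ?thesis
    proof (cases "x \<in> T")
      case True
      have s: "T - {x} \<subseteq> set xs" using Cons.prems(2) by auto
      have c: "card (T - {x}) = m" using Cons.prems(3) Suc True f by simp
      obtain ys where ys: "ys \<in> set (comb m xs)" "set ys = T - {x}" "distinct ys"
        using Cons.IH[OF dx s c] by blast
      have m1: "x#ys \<in> set (comb k (x#xs))" unfolding Suc comb_Suc_Cons using ys(1) by blast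
      have m2: "set (x#ys) = T" using ys(2) True by auto
      have m3: "distinct (x#ys)" using ys(2,3) by simp
      show ?thesis using m1 m2 m3 by blast
    next
      case False
      have s: "T \<subseteq> set xs" using Cons.prems(2) False by auto
      obtain ys where ys: "ys \<in> set (comb k xs)" "set ys = T" "distinct ys"
        using Cons.IH[OF dx s Cons.prems(3)] by blast
      have "ys \<in> set (comb k (x#xs))" unfolding Suc comb_Suc_Cons using ys(1) Suc by blast
      then show ?thesis using ys(2,3) by blast
    qed
  qed
qed

definition phi :: "nat list \<Rightarrow> nat list \<Rightarrow> vtx \<Rightarrow> vtx" where
  "phi ps ss = (\<lambda>(x,y). (pf ps x, pf ss y))"

lemma fq_appq: "fq (appq ps ss q) = phi ps ss ` fq q"
  by (cases q rule: prod_cases4) (simp add: fq_def appq_def phi_def)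

lemma fq_canon: "fq (canon q) = fq q"
  by (cases q rule: prod_cases4) (auto simp: fq_def canon_def insert_commute)

lemma fq_gq: "fq (gq ps ss q) = phi ps ss ` fq q"
  by (simp add: gq_def fq_canon fq_appq)

lemma pf_range: "ps \<in> set P3 \<Longrightarrow> x \<in> {1,2,3} \<Longrightarrow> pf ps x \<in> {1,2,3}"
  by (auto simp: P3_def pf_def)

lemma pf_inj: "ps \<in> set P3 \<Longrightarrow> x \<in> {1,2,3} \<Longrightarrow> y \<in> {1,2,3} \<Longrightarrow> pf ps x = pf ps y \<Longrightarrow> x = y"
  by (auto simp: P3_def pf_def)

lemma pf_out: "x \<notin> {1,2,3} \<Longrightarrow> pf ps x = x"
  by (auto simp: pf_def)

lemma int3: "{1..3::nat} = {1,2,3}"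
  by auto

lemma pf_perm: assumes "ps \<in> set P3" shows "pf ps permutes {1..3}"
proof (rule bij_imp_permutes)
  show "bij_betw (pf ps) {1..3} {1..3}"
    unfolding int3 using assms by (auto simp: bij_betw_def P3_def pf_def)
  show "x \<notin> {1..3} \<Longrightarrow> pf ps x = x" for x unfolding int3 by (rule pf_out)
qed

lemma inj_pf: assumes "ps \<in> set P3" shows "inj (pf ps)"
  using permutes_inj[OF pf_perm[OF assms]] .

lemma inj_phi: assumes "ps \<in> set P3" "ss \<in> set P3" shows "inj (phi ps ss)"
proof (rule injI)
  fix x y assume h: "phi ps ss x = phi ps ss y"
  obtain a b where x: "x = (a,b)" by (cases x)
  obtain c d where y: "y = (c,d)" by (cases y)
  have "pf ps a = pf ps c" "pf ss b = pf ss d" using h by (simp_all add: x y phi_def)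
  then have "a = c" "b = d" using inj_pf[OF assms(1)] inj_pf[OF assms(2)] by (simp_all add: inj_eq)
  then show "x = y" by (simp add: x y)
qed

lemma inj_img: assumes "inj f" shows "inj (image f)"
proof (rule injI)
  fix A B assume "f ` A = f ` B"
  then show "A = B" using inj_image_eq_iff[OF assms] by blast
qed

lemma P3_mem: "a \<in> {1,2,3} \<Longrightarrow> b \<in> {1,2,3} \<Longrightarrow> c \<in> {1,2,3} \<Longrightarrow> a \<noteq> b \<Longrightarrow> a \<noteq> c \<Longrightarrow> b \<noteq> c \<Longrightarrow> [a,b,c] \<in> set P3"
  by (auto simp: P3_def)

lemma perm_pf: assumes h: "p permutes {1..3}" shows "\<exists>ps\<in>set P3. p = pf ps"
proof -
  have r: "p x \<in> {1,2,3}" if "x \<in> {1,2,3}" for x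
    using permutes_in_image[OF h, of x] that unfolding int3 by simp
  have i: "p x \<noteq> p y" if "x \<noteq> y" for x y using permutes_inj[OF h] that by (meson injD)
  have o: "p x = x" if "x \<notin> {1,2,3}" for x using permutes_not_in[OF h] that unfolding int3 by simp
  have m: "[p 1, p 2, p 3] \<in> set P3"
    using P3_mem[OF r[of 1] r[of 2] r[of 3] i[of 1 2] i[of 1 3] i[of 2 3]] by simp
  have "p = pf [p 1, p 2, p 3]"
  proof
    fix x show "p x = pf [p 1, p 2, p 3] x"
      by (cases "x \<in> {1,2,3}") (auto simp: pf_def o)
  qed
  then show ?thesis using m by blast
qed

lemma gq_Q18: assumes "ps \<in> set P3" "ss \<in> set P3" "q \<in> set Q18l" shows "gq ps ss q \<in> set Q18l"
proof -
  obtain i j k l where q: "q = (i,j,k,l)" by (cases q rule: prod_cases4)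
  have h: "i \<in> {1,2,3}" "j \<in> {1,2,3}" "k \<in> {1,2,3}" "l \<in> {1,2,3}" "i < k" "j \<noteq> l"
    using assms(3) by (auto simp: q Q18_iff Q18p_def simp del: insert_iff)
  have r: "pf ps i \<in> {1,2,3}" "pf ss j \<in> {1,2,3}" "pf ps k \<in> {1,2,3}" "pf ss l \<in> {1,2,3}"
    using pf_range assms h by auto
  have n: "pf ps i \<noteq> pf ps k" "pf ss j \<noteq> pf ss l"
    using pf_inj[OF assms(1), of i k] pf_inj[OF assms(2), of j l] h by auto
  show ?thesis using r n
    by (auto simp: q gq_def appq_def canon_def Q18_iff Q18p_def simp del: insert_iff)
qed

lemma gq_inj: assumes "ps \<in> set P3" "ss \<in> set P3" shows "inj_on (gq ps ss) (set Q18l)"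
proof (rule inj_onI)
  fix x y assume xy: "x \<in> set Q18l" "y \<in> set Q18l" "gq ps ss x = gq ps ss y"
  then have "phi ps ss ` fq x = phi ps ss ` fq y" by (metis fq_gq)
  then have "fq x = fq y" using inj_phi[OF assms] by (simp add: inj_image_eq_iff)
  then show "x = y" using inj_fq xy by (meson inj_onD)
qed

lemma B4_eq: "cross_hatch_B4 = fq ` set B4q"
  by (simp add: cross_hatch_B4_def B4q_def fq_def)

lemma B4_Q18: "set B4q \<subseteq> set Q18l"
  by (simp add: B4q_def Q18_iff Q18p_def)

lemma li_iff:
  assumes TQ: "T \<subseteq> set Q18l"
  shows "locally_isomorphic 3 3 (fq ` T) cross_hatch_B4 \<longleftrightarrow> (\<exists>ps\<in>set P3. \<exists>ss\<in>set P3. gq ps ss ` T = set B4q)"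
proof
  assume "\<exists>ps\<in>set P3. \<exists>ss\<in>set P3. gq ps ss ` T = set B4q"
  then obtain ps ss where ps: "ps \<in> set P3" "ss \<in> set P3" and g: "gq ps ss ` T = set B4q" by blast
  have B: "cross_hatch_B4 = image (phi ps ss) ` (fq ` T)"
    unfolding B4_eq g[symmetric] image_image fq_gq ..
  have ii: "inj (image (phi ps ss))" using inj_img inj_phi[OF ps] by blast
  show "locally_isomorphic 3 3 (fq ` T) cross_hatch_B4"
    unfolding locally_isomorphic_def
  proof (intro exI conjI allI)
    show "pf ps permutes {1..3}" "pf ss permutes {1..3}" using pf_perm ps by auto
    fix i j k l
    have e: "{(pf ps i, pf ss j), (pf ps k, pf ss l)} = phi ps ss ` {(i,j),(k,l)}" by (simp add: phi_def)
    have "phi ps ss ` {(i,j),(k,l)} \<in> image (phi ps ss) ` (fq ` T) \<longleftrightarrow> {(i,j),(k,l)} \<in> fq ` T"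
      by (rule inj_image_mem_iff[OF ii])
    then show "{(i, j), (k, l)} \<in> fq ` T \<longleftrightarrow> {(pf ps i, pf ss j), (pf ps k, pf ss l)} \<in> cross_hatch_B4"
      unfolding B e by (rule sym)
  qed
next
  assume "locally_isomorphic 3 3 (fq ` T) cross_hatch_B4"
  then obtain p s where p: "p permutes {1..3}" and s: "s permutes {1..3}"
    and H: "\<And>i j k l. {(i, j), (k, l)} \<in> fq ` T \<longleftrightarrow> {(p i, s j), (p k, s l)} \<in> cross_hatch_B4"
    unfolding locally_isomorphic_def by blast
  obtain ps where ps: "ps \<in> set P3" "p = pf ps" using perm_pf[OF p] by blast
  obtain ss where ss: "ss \<in> set P3" "s = pf ss" using perm_pf[OF s] by blast
  have ph: "phi ps ss ` {(i,j),(k,l)} = {(p i, s j), (p k, s l)}" for i j k l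
    by (simp add: phi_def ps ss)
  have "image (phi ps ss) ` (fq ` T) = cross_hatch_B4"
  proof
    show "image (phi ps ss) ` (fq ` T) \<subseteq> cross_hatch_B4"
    proof
      fix x assume "x \<in> image (phi ps ss) ` (fq ` T)"
      then obtain q where q: "q \<in> T" "x = phi ps ss ` fq q" by auto
      obtain i j k l where qd: "q = (i,j,k,l)" by (cases q rule: prod_cases4)
      have "{(i,j),(k,l)} \<in> fq ` T" using q(1) qd by (force simp: fq_def)
      then have "{(p i, s j), (p k, s l)} \<in> cross_hatch_B4" using H[of i j k l] by blast
      moreover have "x = {(p i, s j), (p k, s l)}" using q(2) ph[of i j k l] unfolding qd by (simp add: fq_def)
      ultimately show "x \<in> cross_hatch_B4" by simp
    qed
  next
    show "cross_hatch_B4 \<subseteq> image (phi ps ss) ` (fq ` T)"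
    proof
      fix x assume "x \<in> cross_hatch_B4"
      then obtain q where q: "q \<in> set B4q" "x = fq q" unfolding B4_eq by auto
      obtain a b c d where qd: "q = (a,b,c,d)" by (cases q rule: prod_cases4)
      have x: "x = {(p (inv p a), s (inv s b)), (p (inv p c), s (inv s d))}"
        using q(2) qd by (simp add: fq_def permutes_inverses[OF p] permutes_inverses[OF s])
      then have e: "{(inv p a, inv s b), (inv p c, inv s d)} \<in> fq ` T"
        using H[of "inv p a" "inv s b" "inv p c" "inv s d"] \<open>x \<in> cross_hatch_B4\<close> x by simp
      have "x = phi ps ss ` {(inv p a, inv s b), (inv p c, inv s d)}" using x ph by simp
      then show "x \<in> image (phi ps ss) ` (fq ` T)" using e by blast
    qed
  qed
  then have "fq ` gq ps ss ` T = fq ` set B4q"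
    unfolding B4_eq[symmetric] image_image fq_gq .
  moreover have sb: "gq ps ss ` T \<subseteq> set Q18l" using gq_Q18 ps ss TQ by auto
  ultimately have "gq ps ss ` T = set B4q"
    using inj_on_image_eq_iff[OF inj_fq sb B4_Q18] by simp
  then show "\<exists>ps\<in>set P3. \<exists>ss\<in>set P3. gq ps ss ` T = set B4q" using ps ss by blast
qed

lemma Q9_Q18: "c \<in> set Q9l \<Longrightarrow> c \<in> set Q18l \<and> sw c \<in> set Q18l"
  by (cases c rule: prod_cases4) (auto simp: Q9_iff Q9p_def Q18_iff Q18p_def sw_def simp del: insert_iff)

lemma cc_fq: "fq ` {(i,j,k,l), sw (i,j,k,l)} = criss_cross i j k l"
  by (simp add: fq_def sw_def criss_cross_def)

lemma cc_norm:
  assumes "i \<in> {1,2,3}" "j \<in> {1,2,3}" "k \<in> {1,2,3}" "l \<in> {1,2,3}" "i \<noteq> k" "j \<noteq> l"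
  shows "\<exists>c\<in>set Q9l. criss_cross i j k l = fq ` {c, sw c}"
proof -
  have s1: "criss_cross a b c d = criss_cross c d a b" for a b c d by (auto simp: criss_cross_def)
  have s2: "criss_cross a b c d = criss_cross a d c b" for a b c d by (auto simp: criss_cross_def)
  consider "i < k" "j < l" | "i < k" "l < j" | "k < i" "j < l" | "k < i" "l < j"
    using assms by linarith
  then show ?thesis
  proof cases
    case 1
    have "(i,j,k,l) \<in> set Q9l" using assms 1 by (auto simp: Q9_iff Q9p_def simp del: insert_iff)
    moreover have "criss_cross i j k l = fq ` {(i,j,k,l), sw (i,j,k,l)}" using cc_fq by metis
    ultimately show ?thesis by blast
  next
    case 2
    have "(i,l,k,j) \<in> set Q9l" using assms 2 by (auto simp: Q9_iff Q9p_def simp del: insert_iff)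
    moreover have "criss_cross i j k l = fq ` {(i,l,k,j), sw (i,l,k,j)}" using cc_fq s2 by metis
    ultimately show ?thesis by blast
  next
    case 3
    have "(k,j,i,l) \<in> set Q9l" using assms 3 by (auto simp: Q9_iff Q9p_def simp del: insert_iff)
    moreover have "criss_cross i j k l = fq ` {(k,j,i,l), sw (k,j,i,l)}" using cc_fq s1 s2 by metis
    ultimately show ?thesis by blast
  next
    case 4
    have "(k,l,i,j) \<in> set Q9l" using assms 4 by (auto simp: Q9_iff Q9p_def simp del: insert_iff)
    moreover have "criss_cross i j k l = fq ` {(k,l,i,j), sw (k,l,i,j)}" using cc_fq s1 by metis
    ultimately show ?thesis by blast
  qed
qed

lemma edge_range:
  assumes "{(i,j),(k,l)} \<in> fq ` T" "T \<subseteq> set Q18l"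
  shows "i \<in> {1,2,3} \<and> j \<in> {1,2,3} \<and> k \<in> {1,2,3} \<and> l \<in> {1,2,3}"
proof -
  obtain q where q: "q \<in> T" "{(i,j),(k,l)} = fq q" using assms(1) by auto
  obtain a b c d where qd: "q = (a,b,c,d)" by (cases q rule: prod_cases4)
  have "Q18p q" using q(1) assms(2) Q18_iff by blast
  then show ?thesis using q(2) by (auto simp: qd fq_def Q18p_def doubleton_eq_iff simp del: insert_iff)
qed

lemma cc_obtain:
  assumes "is_criss_cross C" "C \<subseteq> fq ` T" "T \<subseteq> set Q18l"
  shows "\<exists>c\<in>set Q9l. C = fq ` {c, sw c}"
proof -
  obtain i j k l where C: "i \<noteq> k" "j \<noteq> l" "C = criss_cross i j k l"
    using assms(1) unfolding is_criss_cross_def by blast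
  have "{(i,j),(k,l)} \<in> fq ` T" using C(3) assms(2) by (auto simp: criss_cross_def)
  then have "i \<in> {1,2,3} \<and> j \<in> {1,2,3} \<and> k \<in> {1,2,3} \<and> l \<in> {1,2,3}"
    using edge_range assms(3) by blast
  then show ?thesis using cc_norm C by auto
qed

lemma Q9_lt: "(i,j,k,l) \<in> set Q9l \<Longrightarrow> j < l"
  unfolding Q9_iff Q9p_def by simp

lemma cc_iff:
  assumes TQ: "T \<subseteq> set Q18l"
  shows "(\<exists>C D. is_criss_cross C \<and> is_criss_cross D \<and> C \<inter> D = {} \<and> fq ` T = C \<union> D)
     \<longleftrightarrow> (\<exists>c\<in>set Q9l. \<exists>d\<in>set Q9l. c \<noteq> d \<and> T = set [c, sw c, d, sw d])"
proof
  assume "\<exists>C D. is_criss_cross C \<and> is_criss_cross D \<and> C \<inter> D = {} \<and> fq ` T = C \<union> D"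
  then obtain C D where h: "is_criss_cross C" "is_criss_cross D" "C \<inter> D = {}" "fq ` T = C \<union> D" by blast
  have CT: "C \<subseteq> fq ` T" and DT: "D \<subseteq> fq ` T" using h(4) by auto
  obtain c where c: "c \<in> set Q9l" "C = fq ` {c, sw c}" using cc_obtain[OF h(1) CT TQ] by blast
  obtain d where d: "d \<in> set Q9l" "D = fq ` {d, sw d}" using cc_obtain[OF h(2) DT TQ] by blast
  have "c \<noteq> d"
  proof
    assume "c = d"
    then have "C = D" using c d by simp
    then have "C = {}" using h(3) by simp
    moreover have "fq c \<in> C" using c(2) by simp
    ultimately show False by simp
  qed
  moreover have "T = set [c, sw c, d, sw d]"
  proof -
    have st: "set [c, sw c, d, sw d] = {c, sw c} \<union> {d, sw d}" by auto
    have "fq ` T = fq ` set [c, sw c, d, sw d]" unfolding st image_Un using h(4) c(2) d(2) by simp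
    moreover have "set [c, sw c, d, sw d] \<subseteq> set Q18l" using Q9_Q18 c(1) d(1) by auto
    ultimately show ?thesis using inj_on_image_eq_iff[OF inj_fq TQ] by blast
  qed
  ultimately show "\<exists>c\<in>set Q9l. \<exists>d\<in>set Q9l. c \<noteq> d \<and> T = set [c, sw c, d, sw d]" using c(1) d(1) by blast
next
  assume "\<exists>c\<in>set Q9l. \<exists>d\<in>set Q9l. c \<noteq> d \<and> T = set [c, sw c, d, sw d]"
  then obtain c d where cd: "c \<in> set Q9l" "d \<in> set Q9l" "c \<noteq> d" "T = set [c, sw c, d, sw d]" by blast
  have icc: "is_criss_cross (fq ` {x, sw x})" if "x \<in> set Q9l" for x
  proof -
    obtain i j k l where x: "x = (i,j,k,l)" by (cases x rule: prod_cases4)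
    have "Q9p (i,j,k,l)" using that x Q9_iff by simp
    then have "i \<noteq> k" "j \<noteq> l" by (auto simp: Q9p_def simp del: insert_iff)
    then show ?thesis unfolding x cc_fq is_criss_cross_def by blast
  qed
  have disj: "{c, sw c} \<inter> {d, sw d} = {}"
  proof -
    obtain a b e f where c: "c = (a,b,e,f)" by (cases c rule: prod_cases4)
    obtain a' b' e' f' where d: "d = (a',b',e',f')" by (cases d rule: prod_cases4)
    have "b < f" "b' < f'" using cd(1,2) Q9_lt unfolding c d by blast+
    then show ?thesis using cd(3) unfolding c d by (auto simp: sw_def)
  qed
  have sub1: "{c, sw c} \<subseteq> set Q18l" and sub2: "{d, sw d} \<subseteq> set Q18l" using Q9_Q18 cd(1,2) by auto
  have "fq ` {c, sw c} \<inter> fq ` {d, sw d} = fq ` ({c, sw c} \<inter> {d, sw d})"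
    using inj_on_image_Int[OF inj_fq sub1 sub2] by simp
  then have e1: "fq ` {c, sw c} \<inter> fq ` {d, sw d} = {}" using disj by simp
  have st: "set [c, sw c, d, sw d] = {c, sw c} \<union> {d, sw d}" by auto
  have e2: "fq ` T = fq ` {c, sw c} \<union> fq ` {d, sw d}" unfolding cd(4) st image_Un ..
  show "\<exists>C D. is_criss_cross C \<and> is_criss_cross D \<and> C \<inter> D = {} \<and> fq ` T = C \<union> D"
    using icc[OF cd(1)] icc[OF cd(2)] e1 e2 by blast
qed

lemma ccx_dc:
  assumes "T = set [c, sw c, d, sw d]"
  shows "degree_criterion 3 3 (fq ` T)"
proof -
  have "sw ` T = T" using assms by auto
  then show ?thesis unfolding degree_criterion_def pt_fq by simp
qed

lemma lix_dc:
  assumes TQ: "T \<subseteq> set Q18l" and ps: "ps \<in> set P3" "ss \<in> set P3" and g: "gq ps ss ` T = set B4q"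
  shows "degree_criterion 3 3 (fq ` T)"
proof -
  obtain pre where pre: "(ps,ss,pre) \<in> set LIA" using comp_lia_cover ps by blast
  then have h: "seq (map (gq ps ss) pre) B4q" "distinct pre" "list_all Q18p pre" "sum_list (map Nf pre) = 0"
    using comp_lia by (auto simp: list_all_iff)
  have pQ: "set pre \<subseteq> set Q18l" using h(3) by (auto simp: list_all_iff Q18_iff)
  have "gq ps ss ` set pre = set B4q" using h(1) by (simp add: seq_iff)
  then have Tp: "T = set pre" using inj_on_image_eq_iff[OF gq_inj[OF ps]] g pQ TQ by metis
  have "length pre = card (set B4q)"
    using h(2) \<open>gq ps ss ` set pre = set B4q\<close> gq_inj[OF ps] pQ
    by (metis card_image distinct_card inj_on_subset)
  then have "length pre \<le> 4" by (simp add: B4q_def)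
  then show ?thesis unfolding Tp dc_fq[OF pQ] using enc[OF h(2)] h(4) by simp
qed

theorem mainTheorem13:
  fixes E :: edges
  assumes "grid_graph 3 3 E"
    and "card E = 4"
    and "\<forall>e \<in> E. diagonal e"
  shows "degree_criterion 3 3 E \<longleftrightarrow>
           (locally_isomorphic 3 3 E cross_hatch_B4 \<or>
            (\<exists>C D. is_criss_cross C \<and> is_criss_cross D \<and> C \<inter> D = {} \<and> E = C \<union> D))"
proof -
  have sub: "E \<subseteq> fq ` set Q18l"
  proof
    fix e assume e: "e \<in> E"
    have "diagonal e" using bspec[OF assms(3) e] .
    then obtain i j k l where e1: "e = {(i,j),(k,l)}" "i \<noteq> k" "j \<noteq> l"
      unfolding diagonal_def by (elim exE conjE) (rule that)
    have "e \<in> {{u, v} | u v. u \<in> grid 3 3 \<and> v \<in> grid 3 3 \<and> u \<noteq> v}"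
      using assms(1) e unfolding grid_graph_def by (rule subsetD)
    then obtain u v where uv: "e = {u,v}" "u \<in> grid 3 3" "v \<in> grid 3 3"
      by (elim CollectE exE conjE) (rule that)
    have "(i,j) \<in> {u,v}" "(k,l) \<in> {u,v}" using e1(1) uv(1) by blast+
    then have g: "(i,j) \<in> grid 3 3" "(k,l) \<in> grid 3 3" using uv(2,3) by blast+
    then have g': "i \<in> {1,2,3}" "j \<in> {1,2,3}" "k \<in> {1,2,3}" "l \<in> {1,2,3}"
      unfolding grid_def int3 by blast+
    show "e \<in> fq ` set Q18l"
    proof (cases "i < k")
      case True
      then have "Q18p (i,j,k,l)" using g' e1 by (simp add: Q18p_def del: insert_iff)
      then have m: "(i,j,k,l) \<in> set Q18l" using Q18_iff by blast
      have "e = fq (i,j,k,l)" using e1 by (simp add: fq_def)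
      then show ?thesis using m by (rule image_eqI)
    next
      case False
      then have "k < i" using e1 by simp
      then have "Q18p (k,l,i,j)" using g' e1 by (simp add: Q18p_def del: insert_iff)
      then have m: "(k,l,i,j) \<in> set Q18l" using Q18_iff by blast
      have "e = fq (k,l,i,j)" using e1 by (simp add: fq_def insert_commute)
      then show ?thesis using m by (rule image_eqI)
    qed
  qed
  define T where "T = {q \<in> set Q18l. fq q \<in> E}"
  have TE: "fq ` T = E" using sub by (auto simp: T_def)
  have TQ: "T \<subseteq> set Q18l" by (auto simp: T_def)
  have cT: "card T = 4" using TE assms(2) card_image inj_on_subset[OF inj_fq TQ] by metis
  then obtain ys where ys: "ys \<in> set (comb 4 Q18l)" "set ys = T" "distinct ys"
    using comb_exists[OF distQ18 TQ] by blast
  have len: "length ys = 4" using ys cT distinct_card by metis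
  have E: "E = fq ` T" using TE by simp
  have "degree_criterion 3 3 E \<longleftrightarrow> (\<forall>v\<in>set V9l. card {q \<in> T. fm v q} = card {q \<in> T. fm v (sw q)})"
    unfolding E by (rule dc_fq[OF TQ])
  then have dc: "degree_criterion 3 3 E \<longleftrightarrow> sum_list (map Nf ys) = 0"
    using enc[OF ys(3)] len ys(2) by simp
  have li: "locally_isomorphic 3 3 E cross_hatch_B4 \<longleftrightarrow> (\<exists>ps\<in>set P3. \<exists>ss\<in>set P3. gq ps ss ` T = set B4q)"
    unfolding E by (rule li_iff[OF TQ])
  have cc: "(\<exists>C D. is_criss_cross C \<and> is_criss_cross D \<and> C \<inter> D = {} \<and> E = C \<union> D)
     \<longleftrightarrow> (\<exists>c\<in>set Q9l. \<exists>d\<in>set Q9l. c \<noteq> d \<and> T = set [c, sw c, d, sw d])"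
    unfolding E by (rule cc_iff[OF TQ])
  have good: "sum_list (map Nf ys) = 0 \<longrightarrow> ys \<in> set GoodL"
    using comp_main ys(1) by (simp add: list_all_iff)
  have gcc: "\<exists>c\<in>set Q9l. \<exists>d\<in>set Q9l. c \<noteq> d \<and> T = set [c, sw c, d, sw d]" if m: "ys \<in> set (map fst GCC)"
  proof -
    obtain c d where "(ys,c,d) \<in> set GCC" using m by auto
    then have "c \<in> set Q9l \<and> d \<in> set Q9l \<and> c \<noteq> d \<and> seq ys [c, sw c, d, sw d]"
      using comp_cc by (auto simp: list_all_iff)
    then show ?thesis using ys(2) by (auto simp: seq_iff)
  qed
  have gli: "\<exists>ps\<in>set P3. \<exists>ss\<in>set P3. gq ps ss ` T = set B4q" if m: "ys \<in> set (map fst GLI)"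
  proof -
    obtain ps ss where "(ys,ps,ss) \<in> set GLI" using m by auto
    then have "ps \<in> set P3 \<and> ss \<in> set P3 \<and> seq (map (gq ps ss) ys) B4q"
      using comp_li by (auto simp: list_all_iff)
    then show ?thesis using ys(2) by (auto simp: seq_iff)
  qed
  show ?thesis
  proof
    assume "degree_criterion 3 3 E"
    then have "ys \<in> set GoodL" using dc good by simp
    then have "ys \<in> set (map fst GCC) \<or> ys \<in> set (map fst GLI)" unfolding GoodL_def by simp
    then show "locally_isomorphic 3 3 E cross_hatch_B4 \<or>
            (\<exists>C D. is_criss_cross C \<and> is_criss_cross D \<and> C \<inter> D = {} \<and> E = C \<union> D)"
    proof
      assume "ys \<in> set (map fst GCC)"
      then have "\<exists>C D. is_criss_cross C \<and> is_criss_cross D \<and> C \<inter> D = {} \<and> E = C \<union> D"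
        using gcc cc by simp
      then show ?thesis by (rule disjI2)
    next
      assume "ys \<in> set (map fst GLI)"
      then have "locally_isomorphic 3 3 E cross_hatch_B4" using gli li by simp
      then show ?thesis by (rule disjI1)
    qed
  next
    assume "locally_isomorphic 3 3 E cross_hatch_B4 \<or>
            (\<exists>C D. is_criss_cross C \<and> is_criss_cross D \<and> C \<inter> D = {} \<and> E = C \<union> D)"
    then show "degree_criterion 3 3 E"
    proof
      assume "locally_isomorphic 3 3 E cross_hatch_B4"
      then obtain ps ss where "ps \<in> set P3" "ss \<in> set P3" "gq ps ss ` T = set B4q" using li by blast
      then show ?thesis unfolding E by (rule lix_dc[OF TQ])
    next
      assume "\<exists>C D. is_criss_cross C \<and> is_criss_cross D \<and> C \<inter> D = {} \<and> E = C \<union> D"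
      then obtain c d where "T = set [c, sw c, d, sw d]" using cc by blast
      then show ?thesis unfolding E by (rule ccx_dc)
    qed
  qed
qed

end
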